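(* Suppose the DGF selection rule is run indefinitely (stopping rule ignored). Then for each $m=1,\dots,M$ there exist $C>0$ and $\gamma>0$ such that $\mathbf P_m(\tau_1>n)\le Ce^{-\gamma n}$ for all $n\ge1$.
   Context: Model. Fix integers $M\ge2$, $1\le K\le M$. There are $M$ cells, exactly one containing a target; $H_m$: the target is in cell $m$. $f,g$ are probability densities w.r.t. a common measure with $0<D(g\|f),D(f\|g)<\infty$ ($D(p\|q)=\int p\log(p/q)$), and $\log(g(Y)/f(Y))$ has finite moment generating function near $0$ for $Y\sim f$ and $Y\sim g$. At each time $n$ a set of $K$ distinct cells is selected and an observation $y_k(n)$ is obtained from each selected cell; under $H_m$ observations are independent, law $g$ from cell $m$ and $f$ otherwise. $\mathbf P_m$: probability under $H_m$. Notation. $\ell_k(n)=\log\frac{g(y_k(n))}{f(y_k(n))}$, $\mathbf1_k(n)$ indicates cell $k$ is observed at time $n$, $S_k(n)=\sum_{t\le n}\ell_k(t)\mathbf1_k(t)$, $m^{(i)}(n)$ the cell with $i$-th largest $S_k(n)$ (ties arbitrary). DGF selection rule: at each time (ranking by current sums) select $m^{(1)},\dots,m^{(K)}$ if $D(g\|f)\ge D(f\|g)/(M-1)$ or $K=M$, and $m^{(2)},\dots,m^{(K+1)}$ if $D(g\|f)<D(f\|g)/(M-1)$ and $K<M$. "Run indefinitely" means this rule is applied at every time $n=1,2,\dots$ without stopping. Under $H_m$, $\tau_1$ is the smallest integer such that $S_m(n)>S_j(n)$ for all $j\ne m$ and all $n\ge\tau_1$. *)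

theory Defs
  imports "HOL-Probability.Probability"
begin

definition KL :: "'a measure \<Rightarrow> ('a \<Rightarrow> real) \<Rightarrow> ('a \<Rightarrow> real) \<Rightarrow> real" where
  "KL \<mu> p q = (\<integral>x. p x * ln (p x / q x) \<partial>\<mu>)"

definition llr :: "('a \<Rightarrow> real) \<Rightarrow> ('a \<Rightarrow> real) \<Rightarrow> 'a \<Rightarrow> real" where
  "llr f g y = ln (g y / f y)"

text \<open>S_k(n) = sum over t = 1..n of l_k(t) 1_k(t); Y k t is the observation of cell k at time t,
  sel t is the set of cells observed at time t.\<close>
definition cumS :: "('a \<Rightarrow> real) \<Rightarrow> (nat \<Rightarrow> nat \<Rightarrow> 'w \<Rightarrow> 'a) \<Rightarrow> (nat \<Rightarrow> 'w \<Rightarrow> nat set)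
    \<Rightarrow> nat \<Rightarrow> nat \<Rightarrow> 'w \<Rightarrow> real" where
  "cumS lr Y sel k n \<omega> = (\<Sum>t\<in>{1..n}. if k \<in> sel t \<omega> then lr (Y k t \<omega>) else 0)"

definition topK :: "nat \<Rightarrow> nat set \<Rightarrow> (nat \<Rightarrow> real) \<Rightarrow> nat set \<Rightarrow> bool" where
  "topK K C s A \<longleftrightarrow> A \<subseteq> C \<and> card A = K \<and> (\<forall>a\<in>A. \<forall>b\<in>C - A. s b \<le> s a)"

definition ranks2K :: "nat \<Rightarrow> nat set \<Rightarrow> (nat \<Rightarrow> real) \<Rightarrow> nat set \<Rightarrow> bool" where
  "ranks2K K C s A \<longleftrightarrow> (\<exists>c\<in>C. (\<forall>b\<in>C. s b \<le> s c) \<and> topK K (C - {c}) s A)"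

text \<open>DGF selection rule given current sums s; Dgf = D(g||f), Dfg = D(f||g).\<close>
definition dgf_rule :: "nat \<Rightarrow> nat \<Rightarrow> real \<Rightarrow> real \<Rightarrow> (nat \<Rightarrow> real) \<Rightarrow> nat set \<Rightarrow> bool" where
  "dgf_rule M K Dgf Dfg s A =
     (if Dgf \<ge> Dfg / (real M - 1) \<or> K = M then topK K {1..M} s A else ranks2K K {1..M} s A)"

definition tau1 :: "nat \<Rightarrow> nat \<Rightarrow> (nat \<Rightarrow> nat \<Rightarrow> real) \<Rightarrow> enat" where
  "tau1 M m S = (if \<exists>t. \<forall>n\<ge>t. \<forall>j\<in>{1..M} - {m}. S j n < S m n
      then enat (LEAST t. \<forall>n\<ge>t. \<forall>j\<in>{1..M} - {m}. S j n < S m n) else \<infinity>)"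

definition past_sigma :: "'w measure \<Rightarrow> 'a measure \<Rightarrow> (nat \<Rightarrow> nat \<Rightarrow> 'w \<Rightarrow> 'a) \<Rightarrow> nat \<Rightarrow> nat \<Rightarrow> 'w set set" where
  "past_sigma P \<mu> Y M n = sigma_sets (space P)
     {Y k t -` B \<inter> space P | k t B. k \<in> {1..M} \<and> 1 \<le> t \<and> t < n \<and> B \<in> sets \<mu>}"

end

theory Submission
  imports Defs
begin


lemma exp_quad_bound: "exp (y::real) \<le> 1 + y + y\<^sup>2 * exp \<bar>y\<bar>"
proof -
  obtain t where t: "\<bar>t\<bar> \<le> \<bar>y\<bar>" "exp y = (\<Sum>m<2. (y ^ m) / fact m) + (exp t / fact 2) * y ^ 2"
    using Maclaurin_exp_le[of y 2] by blast
  have "exp t \<le> exp \<bar>y\<bar>" using t(1) by simp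
  then have "exp t * y ^ 2 \<le> exp \<bar>y\<bar> * y ^ 2"
    by (rule mult_right_mono) simp
  moreover have "0 \<le> exp \<bar>y\<bar> * y ^ 2" by simp
  moreover have "(exp t / fact 2) * y ^ 2 = (exp t * y ^ 2) / 2" by (simp add: eval_nat_numeral)
  moreover have "y\<^sup>2 * exp \<bar>y\<bar> = exp \<bar>y\<bar> * y ^ 2" by simp
  ultimately have "(exp t / fact 2) * y ^ 2 \<le> y\<^sup>2 * exp \<bar>y\<bar>"
    by linarith
  moreover have "(\<Sum>m<2. (y ^ m) / fact m) = 1 + y" by (simp add: eval_nat_numeral)
  ultimately show ?thesis using t(2) by linarith
qed

lemma sq_le_exp: "(x::real)\<^sup>2 \<le> 2 * exp \<bar>x\<bar>"
proof -
  have "1 + \<bar>x\<bar> + \<bar>x\<bar>\<^sup>2/2 \<le> exp \<bar>x\<bar>"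
    using exp_lower_Taylor_quadratic[of "\<bar>x\<bar>"] by simp
  then show ?thesis by simp
qed

lemma pt_bound:
  fixes a s x :: real
  assumes a: "a > 0" and s: "0 < s" "s \<le> a/2"
  shows "exp (s * x) \<le> 1 + s * x + s\<^sup>2 * ((8 / a\<^sup>2) * (exp (a * x) + exp (- a * x)))"
proof -
  have 1: "exp (s*x) \<le> 1 + s*x + (s*x)\<^sup>2 * exp \<bar>s*x\<bar>" by (rule exp_quad_bound)
  have 2: "(a*x/2)\<^sup>2 \<le> 2 * exp \<bar>a*x/2\<bar>" by (rule sq_le_exp)
  have "x\<^sup>2 = (4/a\<^sup>2) * (a*x/2)\<^sup>2" using a by (simp add: power2_eq_square field_simps)
  also have "\<dots> \<le> (4/a\<^sup>2) * (2 * exp \<bar>a*x/2\<bar>)" using 2 a by (intro mult_left_mono) auto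
  finally have 3: "x\<^sup>2 \<le> (8/a\<^sup>2) * exp (a*\<bar>x\<bar>/2)" using a by (simp add: abs_mult)
  have "2 * s * abs x \<le> a * abs x" using s by (intro mult_right_mono) auto
  hence 4: "exp \<bar>s*x\<bar> \<le> exp (a*\<bar>x\<bar>/2)" using s by (simp add: abs_mult)
  have "x\<^sup>2 * exp \<bar>s*x\<bar> \<le> (8/a\<^sup>2) * exp (a*\<bar>x\<bar>/2) * exp (a*\<bar>x\<bar>/2)"
    using 3 4 by (intro mult_mono) auto
  also have "\<dots> = (8/a\<^sup>2) * exp (a*\<bar>x\<bar>)" by (simp add: mult.assoc flip: exp_add)
  also have "exp (a*\<bar>x\<bar>) \<le> exp (a * x) + exp (- a * x)"
    using a by (cases "x \<ge> 0") auto
  hence "(8/a\<^sup>2) * exp (a*\<bar>x\<bar>) \<le> (8/a\<^sup>2) * (exp (a * x) + exp (- a * x))"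
    by (intro mult_left_mono) auto
  finally have 5: "x\<^sup>2 * exp \<bar>s*x\<bar> \<le> (8/a\<^sup>2) * (exp (a * x) + exp (- a * x))" .
  have "(s*x)\<^sup>2 * exp \<bar>s*x\<bar> = s\<^sup>2 * (x\<^sup>2 * exp \<bar>s*x\<bar>)" by (simp add: power_mult_distrib)
  also have "\<dots> \<le> s\<^sup>2 * ((8/a\<^sup>2) * (exp (a * x) + exp (- a * x)))"
    using 5 by (intro mult_left_mono) auto
  finally show ?thesis using 1 by linarith
qed

lemma mgf_contract:
  fixes X :: "'a \<Rightarrow> real" and \<delta> :: real
  assumes Q: "prob_space Q" and Xm[measurable]: "X \<in> borel_measurable Q" and Xi: "integrable Q X"
    and neg: "(\<integral>x. X x \<partial>Q) < 0" and d: "\<delta> > 0"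
    and mgf: "\<forall>t. \<bar>t\<bar> < \<delta> \<longrightarrow> integrable Q (\<lambda>x. exp (t * X x))"
  shows "\<exists>s0>0. \<exists>c>0. \<forall>s. 0 < s \<and> s \<le> s0 \<longrightarrow>
            integrable Q (\<lambda>x. exp (s * X x)) \<and> (\<integral>x. exp (s * X x) \<partial>Q) \<le> 1 - c * s"
proof -
  interpret prob_space Q by (rule Q)
  define a where "a = \<delta>/2"
  have a: "a > 0" "a < \<delta>" using d by (auto simp: a_def)
  define B where "B x = (8 / a\<^sup>2) * (exp (a * X x) + exp (- a * X x))" for x
  have i1: "integrable Q (\<lambda>x. exp (a * X x))" using mgf a by auto
  have i2: "integrable Q (\<lambda>x. exp ((- a) * X x))" using mgf[rule_format, of "-a"] a by simp
  have iB: "integrable Q B" unfolding B_def using i1 i2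
    by (intro integrable_mult_right integrable_add) auto
  define D where "D = - (\<integral>x. X x \<partial>Q)"
  have D: "D > 0" using neg by (simp add: D_def)
  define K where "K = (\<integral>x. B x \<partial>Q) + 1"
  have "(\<integral>x. B x \<partial>Q) \<ge> 0" unfolding B_def by (intro integral_nonneg_AE) (auto intro!: add_nonneg_nonneg)
  hence K: "K > 0" by (simp add: K_def)
  define s0 where "s0 = min (a/2) (D / (2*K))"
  have s0: "s0 > 0" using a D K by (simp add: s0_def)
  have main: "\<forall>s. 0 < s \<and> s \<le> s0 \<longrightarrow> integrable Q (\<lambda>x. exp (s * X x)) \<and> (\<integral>x. exp (s * X x) \<partial>Q) \<le> 1 - D/2 * s"
  proof (intro allI impI)
    fix s assume s: "0 < s \<and> s \<le> s0"
    have sa: "s \<le> a/2" "s \<le> D/(2*K)" using s by (auto simp: s0_def)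
    have ie: "integrable Q (\<lambda>x. exp (s * X x))" using mgf s sa a by auto
    have ir: "integrable Q (\<lambda>x. 1 + s * X x + s\<^sup>2 * B x)"
    proof -
      have "integrable Q (\<lambda>x. s * X x)" using Xi by simp
      moreover have "integrable Q (\<lambda>x. s\<^sup>2 * B x)" using iB by simp
      moreover have "integrable Q (\<lambda>x. 1::real)" by simp
      ultimately show ?thesis by (intro Bochner_Integration.integrable_add) 
    qed
    have "(\<integral>x. exp (s * X x) \<partial>Q) \<le> (\<integral>x. 1 + s * X x + s\<^sup>2 * B x \<partial>Q)"
      using ie ir pt_bound[OF a(1), of s] s sa unfolding B_def
      by (intro integral_mono) auto
    also have "\<dots> = 1 - s * D + s\<^sup>2 * (K - 1)"
      using Xi iB by (simp add: D_def K_def prob_space)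
    also have "\<dots> \<le> 1 - s * D + s\<^sup>2 * K" using s by simp
    also have "s\<^sup>2 * K \<le> s * (D/2)"
    proof -
      have "s * K \<le> D/2" using sa(2) K by (simp add: field_simps)
      hence "s * (s * K) \<le> s * (D/2)" using s by (intro mult_left_mono) auto
      thus ?thesis by (simp add: power2_eq_square mult.assoc)
    qed
    finally show "integrable Q (\<lambda>x. exp (s * X x)) \<and> (\<integral>x. exp (s * X x) \<partial>Q) \<le> 1 - D/2 * s"
      using ie by (simp add: algebra_simps)
  qed
  show ?thesis using s0 D main by (intro exI[of _ s0] conjI exI[of _ "D/2"]) auto
qed




lemma swap_sum:
  fixes s :: "nat \<Rightarrow> real"
  assumes "finite T" "b \<in> T" "a \<notin> T" "s b \<le> s a"
  shows "(\<Sum>j\<in>T. s j - s m) \<le> (\<Sum>j\<in>insert a (T - {b}). s j - s m)"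
proof -
  have "(\<Sum>j\<in>T. s j - s m) = (s b - s m) + (\<Sum>j\<in>T - {b}. s j - s m)"
    using assms by (simp add: sum.remove)
  moreover have "(\<Sum>j\<in>insert a (T - {b}). s j - s m) = (s a - s m) + (\<Sum>j\<in>T - {b}. s j - s m)"
    using assms by (simp add: sum.insert)
  ultimately show ?thesis using assms by simp
qed

lemma dominate:
  fixes s :: "nat \<Rightarrow> real"
  assumes rule: "dgf_rule M K a0 b0 s A" and K: "1 \<le> K" and m: "m \<in> {1..M}" and mA: "m \<notin> A"
    and T: "T \<subseteq> {1..M} - {m}" "T \<noteq> {}" "T \<inter> A = {}"
  shows "\<exists>T'. T' \<subseteq> {1..M} - {m} \<and> T' \<noteq> {} \<and> T' \<inter> A \<noteq> {} \<and>
           (\<Sum>j\<in>T. s j - s m) \<le> (\<Sum>j\<in>T'. s j - s m)"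
proof -
  have finT: "finite T" using T(1) finite_subset by blast
  have swap: "\<exists>T'. T' \<subseteq> {1..M} - {m} \<and> T' \<noteq> {} \<and> T' \<inter> A \<noteq> {} \<and>
           (\<Sum>j\<in>T. s j - s m) \<le> (\<Sum>j\<in>T'. s j - s m)"
    if "b \<in> T" "a \<in> A" "a \<in> {1..M}" "a \<noteq> m" "s b \<le> s a" for a b
  proof (intro exI[of _ "insert a (T - {b})"] conjI)
    show "insert a (T - {b}) \<subseteq> {1..M} - {m}" using that T by auto
    show "(\<Sum>j\<in>T. s j - s m) \<le> (\<Sum>j\<in>insert a (T - {b}). s j - s m)"
      using swap_sum[OF finT that(1) _ that(5)] that T by blast
    show "insert a (T - {b}) \<noteq> {}" by simp
    show "insert a (T - {b}) \<inter> A \<noteq> {}" using that by blast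
  qed
  show ?thesis
  proof (cases "topK K {1..M} s A")
    case True
    then have A: "A \<subseteq> {1..M}" "card A = K" "\<forall>a\<in>A. \<forall>b\<in>{1..M} - A. s b \<le> s a"
      unfolding topK_def by auto
    then obtain a where a: "a \<in> A" using K by fastforce
    obtain b where b: "b \<in> T" using T by blast
    have am: "a \<in> {1..M}" "a \<noteq> m" using A(1) a mA by auto
    have bA: "b \<in> {1..M} - A" using b T by blast
    have "s b \<le> s a" using A(3) a bA by blast
    then show ?thesis using swap[OF b a am] by blast
  next
    case False
    then have "ranks2K K {1..M} s A" using rule by (auto simp: dgf_rule_def split: if_splits)
    then obtain c where c: "c \<in> {1..M}" "\<forall>b\<in>{1..M}. s b \<le> s c" and tk: "topK K ({1..M} - {c}) s A"
      unfolding ranks2K_def by blast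
    then have A: "A \<subseteq> {1..M} - {c}" "card A = K" "\<forall>a\<in>A. \<forall>b\<in>({1..M} - {c}) - A. s b \<le> s a"
      unfolding topK_def by auto
    then obtain a where a: "a \<in> A" using K by fastforce
    show ?thesis
    proof (cases "\<exists>b\<in>T. b \<noteq> c")
      case True
      then obtain b where b: "b \<in> T" "b \<noteq> c" by blast
      have am: "a \<in> {1..M}" "a \<noteq> m" using A(1) a mA by auto
      have bA: "b \<in> ({1..M} - {c}) - A" using b T by blast
      have "s b \<le> s a" using A(3) a bA by blast
      then show ?thesis using swap[OF b(1) a am] by blast
    next
      case False
      then have Tc: "T = {c}" using T by auto
      have ac: "a \<noteq> c" "a \<in> {1..M}" "a \<noteq> m" using A a mA by auto
      have mc: "m \<noteq> c" using Tc T by auto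
      have "m \<in> ({1..M} - {c}) - A" using mc m mA by blast
      then have "s m \<le> s a" using A(3) a by blast
      show ?thesis
      proof (intro exI[of _ "{c, a}"] conjI)
        show "{c, a} \<subseteq> {1..M} - {m}" using Tc T ac by auto
        show "(\<Sum>j\<in>T. s j - s m) \<le> (\<Sum>j\<in>{c, a}. s j - s m)"
          using Tc ac \<open>s m \<le> s a\<close> by simp
        show "{c, a} \<noteq> {}" by simp
        show "{c, a} \<inter> A \<noteq> {}" using a by blast
      qed
    qed
  qed
qed

lemma contract_pt:
  fixes tf :: "'t \<Rightarrow> real" and lam :: real
  assumes fin: "finite TT" and pos: "\<forall>T\<in>TT. 0 \<le> tf T" and lam: "0 \<le> lam" "lam \<le> 1"
    and dom: "\<forall>T\<in>TT. \<not> P T \<longrightarrow> (\<exists>T'\<in>TT. P T' \<and> tf T \<le> tf T')"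
  shows "(\<Sum>T\<in>TT. (if P T then lam else 1) * tf T) \<le> ((lam + card TT) / (1 + card TT)) * (\<Sum>T\<in>TT. tf T)"
proof -
  define a where "a = (\<Sum>T\<in>{T\<in>TT. P T}. tf T)"
  define b where "b = (\<Sum>T\<in>{T\<in>TT. \<not> P T}. tf T)"
  define N where "N = real (card TT)"
  have split: "(\<Sum>T\<in>TT. g T) = (\<Sum>T\<in>{T\<in>TT. P T}. g T) + (\<Sum>T\<in>{T\<in>TT. \<not> P T}. g T)" for g :: "'t \<Rightarrow> real"
  proof -
    have e: "TT \<inter> Collect P = {T\<in>TT. P T}" "TT - Collect P = {T\<in>TT. \<not> P T}" by auto
    show ?thesis using sum.Int_Diff[OF fin, of g "Collect P"] unfolding e .
  qed
  have L: "(\<Sum>T\<in>TT. (if P T then lam else 1) * tf T) = lam * a + b"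
    unfolding split[of "\<lambda>T. (if P T then lam else 1) * tf T"] a_def b_def
    by (simp add: sum_distrib_left)
  have S: "(\<Sum>T\<in>TT. tf T) = a + b" unfolding split[of tf] a_def b_def ..
  have each: "tf T \<le> a" if hT: "T \<in> TT" "\<not> P T" for T
  proof -
    obtain T' where T': "T' \<in> TT" "P T'" "tf T \<le> tf T'" using dom hT by blast
    have "tf T' \<le> a" unfolding a_def using T' fin pos
      by (intro member_le_sum) auto
    then show ?thesis using T' by simp
  qed
  have "b \<le> (\<Sum>T\<in>{T\<in>TT. \<not> P T}. a)" unfolding b_def using each by (intro sum_mono) auto
  also have "\<dots> = real (card {T\<in>TT. \<not> P T}) * a" by simp
  also have "\<dots> \<le> N * a"
  proof -
    have "a \<ge> 0" unfolding a_def using pos by (intro sum_nonneg) auto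
    moreover have "card {T\<in>TT. \<not> P T} \<le> card TT" using fin by (intro card_mono) auto
    ultimately show ?thesis unfolding N_def by (intro mult_right_mono) auto
  qed
  finally have bN: "b \<le> N * a" .
  have N0: "N \<ge> 0" by (simp add: N_def)
  have "(1 + N) * (lam * a + b) \<le> (lam + N) * (a + b)"
  proof -
    have "(1 - lam) * b \<le> (1 - lam) * (N * a)" using bN lam by (intro mult_left_mono) auto
    thus ?thesis by (simp add: algebra_simps)
  qed
  hence "lam * a + b \<le> ((lam + N) / (1 + N)) * (a + b)"
    using N0 by (simp add: field_simps)
  thus ?thesis using L S N_def by simp
qed




locale dgfl =
  fixes \<mu> :: "'a measure" and f g :: "'a \<Rightarrow> real" and P :: "'w measure"
    and Y :: "nat \<Rightarrow> nat \<Rightarrow> 'w \<Rightarrow> 'a" and sel :: "nat \<Rightarrow> 'w \<Rightarrow> nat set" and M m :: nat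
  assumes fm[measurable]: "f \<in> borel_measurable \<mu>" and gm[measurable]: "g \<in> borel_measurable \<mu>"
    and PP: "prob_space P"
    and indep: "prob_space.indep_vars P (\<lambda>_. \<mu>) (\<lambda>(k, t). Y k t) ({1..M} \<times> UNIV)"
    and sel_sub: "\<forall>n\<ge>1. \<forall>\<omega>\<in>space P. sel n \<omega> \<subseteq> {1..M}"
    and sel_meas: "\<forall>n\<ge>1. \<forall>A. {\<omega> \<in> space P. sel n \<omega> = A} \<in> past_sigma P \<mu> Y M n"
begin

definition gens :: "nat \<Rightarrow> 'w set set" where
  "gens n = {Y k t -` B \<inter> space P | k t B. k \<in> {1..M} \<and> 1 \<le> t \<and> t < Suc n \<and> B \<in> sets \<mu>}"

definition Fn :: "nat \<Rightarrow> 'w measure" where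
  "Fn n = sigma (space P) (gens n)"

lemma Y_meas: "k \<in> {1..M} \<Longrightarrow> Y k t \<in> measurable P \<mu>"
proof -
  assume k: "k \<in> {1..M}"
  interpret prob_space P by (rule PP)
  have "random_variable \<mu> ((\<lambda>(k, t). Y k t) (k, t))"
    using indep k unfolding indep_vars_def by blast
  then show ?thesis by simp
qed

lemma gens_Pow: "gens n \<subseteq> Pow (space P)"
  unfolding gens_def by auto

lemma space_Fn[simp]: "space (Fn n) = space P"
  unfolding Fn_def using gens_Pow by (simp add: space_measure_of)

lemma sets_Fn: "sets (Fn n) = past_sigma P \<mu> Y M (Suc n)"
  unfolding Fn_def past_sigma_def using gens_Pow by (simp add: sets_measure_of gens_def)

lemma subalg_Fn: "subalgebra P (Fn n)"
  unfolding subalgebra_def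
proof
  show "space (Fn n) = space P" by simp
  have "gens n \<subseteq> sets P" unfolding gens_def using Y_meas by (auto dest: measurable_sets)
  then show "sets (Fn n) \<subseteq> sets P"
    unfolding Fn_def using gens_Pow by (simp add: sets_measure_of sets.sigma_sets_subset)
qed

lemma Y_meas_Fn: "k \<in> {1..M} \<Longrightarrow> 1 \<le> t \<Longrightarrow> t \<le> n \<Longrightarrow> Y k t \<in> measurable (Fn n) \<mu>"
proof (rule measurableI)
  assume k: "k \<in> {1..M}" and t: "1 \<le> t" "t \<le> n"
  fix x assume "x \<in> space (Fn n)"
  then show "Y k t x \<in> space \<mu>" using Y_meas[OF k] by (auto dest: measurable_space)
next
  assume k: "k \<in> {1..M}" and t: "1 \<le> t" "t \<le> n"
  fix B assume B: "B \<in> sets \<mu>"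
  have "t < Suc n" using t by simp
  then have "Y k t -` B \<inter> space P \<in> gens n" unfolding gens_def using k t B by blast
  then show "Y k t -` B \<inter> space (Fn n) \<in> sets (Fn n)"
    unfolding Fn_def using gens_Pow by (simp add: sets_measure_of)
qed

lemma past_mono: "n \<le> n' \<Longrightarrow> past_sigma P \<mu> Y M n \<subseteq> past_sigma P \<mu> Y M n'"
  unfolding past_sigma_def
proof (intro sigma_sets_subseteq subsetI)
  assume nn: "n \<le> n'"
  fix x assume "x \<in> {Y k t -` B \<inter> space P |k t B. k \<in> {1..M} \<and> 1 \<le> t \<and> t < n \<and> B \<in> sets \<mu>}"
  then obtain k t B where "x = Y k t -` B \<inter> space P" "k \<in> {1..M}" "1 \<le> t" "t < n" "B \<in> sets \<mu>" by blast
  moreover have "t < n'" using \<open>t < n\<close> nn by simp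
  ultimately show "x \<in> {Y k t -` B \<inter> space P |k t B. k \<in> {1..M} \<and> 1 \<le> t \<and> t < n' \<and> B \<in> sets \<mu>}" by blast
qed

lemma sel_eq_Fn: "1 \<le> t \<Longrightarrow> t \<le> Suc n \<Longrightarrow> {\<omega> \<in> space P. sel t \<omega> = A} \<in> sets (Fn n)"
  using sel_meas past_mono[of t "Suc n"] unfolding sets_Fn by auto

lemma sel_mem_Fn: "1 \<le> t \<Longrightarrow> t \<le> Suc n \<Longrightarrow> {\<omega>. k \<in> sel t \<omega>} \<inter> space (Fn n) \<in> sets (Fn n)"
proof -
  assume t: "1 \<le> t" "t \<le> Suc n"
  have "{\<omega>. k \<in> sel t \<omega>} \<inter> space (Fn n) = (\<Union>A\<in>{A. A \<subseteq> {1..M} \<and> k \<in> A}. {\<omega> \<in> space P. sel t \<omega> = A})"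
    using sel_sub t by auto
  also have "\<dots> \<in> sets (Fn n)"
    by (intro sets.finite_UN sel_eq_Fn t) (auto intro: finite_subset[of _ "Pow {1..M}"])
  finally show ?thesis .
qed

lemma llr_meas[measurable]: "llr f g \<in> borel_measurable \<mu>"
  unfolding llr_def by measurable

abbreviation "S k n \<omega> \<equiv> cumS (llr f g) Y sel k n \<omega>"

lemma inc_meas: "k \<in> {1..M} \<Longrightarrow> 1 \<le> t \<Longrightarrow> t \<le> n \<Longrightarrow>
   (\<lambda>\<omega>. if k \<in> sel t \<omega> then llr f g (Y k t \<omega>) else 0) \<in> borel_measurable (Fn n)"
proof -
  assume a: "k \<in> {1..M}" "1 \<le> t" "t \<le> n"
  have "(\<lambda>\<omega>. if \<omega> \<in> {\<omega>. k \<in> sel t \<omega>} then llr f g (Y k t \<omega>) else 0) \<in> borel_measurable (Fn n)"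
    using a by (intro measurable_If_set sel_mem_Fn measurable_compose[OF Y_meas_Fn llr_meas]) auto
  then show ?thesis by simp
qed

lemma S_meas: "k \<in> {1..M} \<Longrightarrow> (\<lambda>\<omega>. S k n \<omega>) \<in> borel_measurable (Fn n)"
  unfolding cumS_def by (intro borel_measurable_sum inc_meas) auto

lemma indep_step:
  fixes Z :: "'w \<Rightarrow> ennreal" and h :: "'a \<Rightarrow> ennreal"
  assumes Z: "Z \<in> borel_measurable (Fn n)" and j: "j \<in> {1..M}" and h: "h \<in> borel_measurable \<mu>"
  shows "(\<integral>\<^sup>+\<omega>. Z \<omega> * h (Y j (Suc n) \<omega>) \<partial>P) = (\<integral>\<^sup>+\<omega>. Z \<omega> \<partial>P) * (\<integral>\<^sup>+\<omega>. h (Y j (Suc n) \<omega>) \<partial>P)"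
proof -
  interpret prob_space P by (rule PP)
  define E where "E i = {(\<lambda>(k,t). Y k t) i -` A \<inter> space P | A. A \<in> sets \<mu>}" for i
  have iE: "indep_sets E ({1..M} \<times> UNIV)" using indep unfolding indep_vars_def2 E_def by blast
  define I where "I b = (if b then {1..M} \<times> {1..n} else {(j, Suc n)})" for b
  have "(\<Union>b\<in>UNIV. I b) \<subseteq> {1..M} \<times> UNIV" using j by (auto simp: I_def)
  hence iE2: "indep_sets E (\<Union>b\<in>UNIV. I b)" by (rule indep_sets_mono_index[OF _ iE])
  have IS: "Int_stable (E i)" for i
    unfolding Int_stable_def
  proof (intro ballI)
    fix a b assume "a \<in> E i" "b \<in> E i"
    then obtain A B where "a = (\<lambda>(k,t). Y k t) i -` A \<inter> space P" "A \<in> sets \<mu>"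
      "b = (\<lambda>(k,t). Y k t) i -` B \<inter> space P" "B \<in> sets \<mu>" unfolding E_def by blast
    then have "a \<inter> b = (\<lambda>(k,t). Y k t) i -` (A \<inter> B) \<inter> space P" "A \<inter> B \<in> sets \<mu>" by auto
    then show "a \<inter> b \<in> E i" unfolding E_def by blast
  qed
  have disj: "disjoint_family_on I UNIV"
    unfolding disjoint_family_on_def I_def by auto
  have ind: "indep_sets (\<lambda>b. sigma_sets (space P) (\<Union>i\<in>I b. E i)) UNIV"
    by (rule indep_sets_collect_sigma[OF iE2 IS disj])
  have U1: "(\<Union>i\<in>I True. E i) = gens n"
  proof
    show "(\<Union>i\<in>I True. E i) \<subseteq> gens n"
    proof
      fix x assume "x \<in> (\<Union>i\<in>I True. E i)"
      then obtain k t A where "k \<in> {1..M}" "t \<in> {1..n}" "x = Y k t -` A \<inter> space P" "A \<in> sets \<mu>"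
        unfolding I_def E_def by auto
      moreover have "1 \<le> t" "t < Suc n" using \<open>t \<in> {1..n}\<close> by auto
      ultimately show "x \<in> gens n" unfolding gens_def by blast
    qed
    show "gens n \<subseteq> (\<Union>i\<in>I True. E i)"
    proof
      fix x assume "x \<in> gens n"
      then obtain k t A where "k \<in> {1..M}" "1 \<le> t" "t < Suc n" "x = Y k t -` A \<inter> space P" "A \<in> sets \<mu>"
        unfolding gens_def by blast
      moreover have "(k, t) \<in> I True" using calculation by (auto simp: I_def)
      moreover have "x \<in> E (k, t)" unfolding E_def using calculation by auto
      ultimately show "x \<in> (\<Union>i\<in>I True. E i)" by blast
    qed
  qed
  have U2: "(\<Union>i\<in>I False. E i) = E (j, Suc n)" by (simp add: I_def)
  have eqf: "(\<lambda>b. sigma_sets (space P) (\<Union>i\<in>I b. E i)) =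
      case_bool (sigma_sets (space P) (gens n)) (sigma_sets (space P) (E (j, Suc n)))"
    by (rule ext, case_tac b) (simp_all only: U1 U2 bool.case)
  define W where "W \<omega> = h (Y j (Suc n) \<omega>)" for \<omega>
  have ZP: "Z \<in> borel_measurable P" by (rule measurable_from_subalg[OF subalg_Fn Z])
  have WP: "W \<in> borel_measurable P" unfolding W_def by (rule measurable_compose[OF Y_meas[OF j] h])
  have sub1: "sigma_sets (space P) {Z -` A \<inter> space P | A. A \<in> sets borel} \<subseteq> sigma_sets (space P) (gens n)"
  proof (rule sigma_sets_mono, rule subsetI)
    fix x assume "x \<in> {Z -` A \<inter> space P | A. A \<in> sets borel}"
    then obtain A where "x = Z -` A \<inter> space (Fn n)" "A \<in> sets borel" by auto
    then have "x \<in> sets (Fn n)" using Z by (auto dest: measurable_sets)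
    then show "x \<in> sigma_sets (space P) (gens n)" unfolding Fn_def using gens_Pow by (simp add: sets_measure_of)
  qed
  have sub2: "sigma_sets (space P) {W -` A \<inter> space P | A. A \<in> sets borel} \<subseteq> sigma_sets (space P) (E (j, Suc n))"
  proof (rule sigma_sets_subseteq, rule subsetI)
    fix x assume "x \<in> {W -` A \<inter> space P | A. A \<in> sets borel}"
    then obtain A where A: "x = W -` A \<inter> space P" "A \<in> sets borel" by auto
    have "x = Y j (Suc n) -` (h -` A \<inter> space \<mu>) \<inter> space P"
      using A Y_meas[OF j] unfolding W_def by (auto dest: measurable_space)
    moreover have "h -` A \<inter> space \<mu> \<in> sets \<mu>" using h A by (auto dest: measurable_sets)
    ultimately show "x \<in> E (j, Suc n)" unfolding E_def by (simp only: prod.case) blast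
  qed
  have "indep_set (sigma_sets (space P) (gens n)) (sigma_sets (space P) (E (j, Suc n)))"
    using ind unfolding indep_set_def eqf .
  then have "indep_set (sigma_sets (space P) {Z -` A \<inter> space P | A. A \<in> sets borel})
        (sigma_sets (space P) {W -` A \<inter> space P | A. A \<in> sets borel})"
    unfolding indep_set_def
    apply (rule indep_sets_mono_sets)
    subgoal for i by (cases i) (simp_all only: sub1 sub2 bool.case)
    done
  then have iv: "indep_var borel Z borel W"
    by (subst indep_var_eq) (intro conjI ZP WP)
  have bb: "(\<lambda>_. borel) = case_bool borel borel"
    by (rule ext, metis (full_types) bool.simps(3) bool.simps(4))
  have "indep_vars (\<lambda>_. borel) (case_bool Z W) UNIV"
    using iv unfolding indep_var_def bb .
  from indep_vars_nn_integral[OF _ this]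
  have "(\<integral>\<^sup>+\<omega>. (\<Prod>i\<in>UNIV. case_bool Z W i \<omega>) \<partial>P) = (\<Prod>i\<in>UNIV. \<integral>\<^sup>+\<omega>. case_bool Z W i \<omega> \<partial>P)"
    by simp
  then show ?thesis unfolding W_def by (simp add: UNIV_bool mult.commute)
qed

end



lemma ln_div_swap: "ln ((b::real) / a) = - ln (a / b)"
  by (simp add: ln_div)

lemma kl_side_f:
  assumes fm[measurable]: "f \<in> borel_measurable \<mu>" and gm[measurable]: "g \<in> borel_measurable \<mu>"
    and fp: "\<forall>x\<in>space \<mu>. 0 \<le> f x"
    and pf: "prob_space (density \<mu> (\<lambda>x. ennreal (f x)))"
    and ifg: "integrable \<mu> (\<lambda>x. f x * ln (f x / g x))" and kl: "0 < KL \<mu> f g"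
    and mgf: "\<exists>\<delta>>0. \<forall>t::real. \<bar>t\<bar> < \<delta> \<longrightarrow> integrable (density \<mu> (\<lambda>x. ennreal (f x))) (\<lambda>y. exp (t * llr f g y))"
  shows "\<exists>s0>0. \<exists>c>0. \<forall>s. 0 < s \<and> s \<le> s0 \<longrightarrow>
      integrable (density \<mu> (\<lambda>x. ennreal (f x))) (\<lambda>x. exp (s * llr f g x)) \<and>
      (\<integral>x. exp (s * llr f g x) \<partial>density \<mu> (\<lambda>x. ennreal (f x))) \<le> 1 - c * s"
proof -
  obtain \<delta> where d: "\<delta> > 0" "\<forall>t::real. \<bar>t\<bar> < \<delta> \<longrightarrow> integrable (density \<mu> (\<lambda>x. ennreal (f x))) (\<lambda>y. exp (t * llr f g y))"
    using mgf by blast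
  have AEf: "AE x in \<mu>. 0 \<le> f x" using fp by (auto intro: AE_I2)
  have eq: "f x *\<^sub>R llr f g x = - (f x * ln (f x / g x))" for x
    by (simp add: llr_def ln_div algebra_simps)
  have Xm: "llr f g \<in> borel_measurable (density \<mu> (\<lambda>x. ennreal (f x)))"
    unfolding llr_def by simp
  have Xi: "integrable (density \<mu> (\<lambda>x. ennreal (f x))) (llr f g)"
  proof -
    have "(\<lambda>x. f x *\<^sub>R llr f g x) = (\<lambda>x. - (f x * ln (f x / g x)))" by (rule ext, rule eq)
    then have "integrable \<mu> (\<lambda>x. f x *\<^sub>R llr f g x)" using ifg by simp
    then show ?thesis using integrable_density[of "llr f g" \<mu> f] AEf unfolding llr_def by simp
  qed
  have "(\<integral>x. llr f g x \<partial>density \<mu> (\<lambda>x. ennreal (f x))) = (\<integral>x. f x *\<^sub>R llr f g x \<partial>\<mu>)"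
    using integral_density[of "llr f g" \<mu> f] AEf unfolding llr_def by simp
  also have "\<dots> = - KL \<mu> f g" unfolding eq KL_def by simp
  finally have neg: "(\<integral>x. llr f g x \<partial>density \<mu> (\<lambda>x. ennreal (f x))) < 0" using kl by simp
  show ?thesis using mgf_contract[OF pf Xm Xi neg d(1)] d(2) by simp
qed

lemma kl_side_g:
  assumes fm[measurable]: "f \<in> borel_measurable \<mu>" and gm[measurable]: "g \<in> borel_measurable \<mu>"
    and gp: "\<forall>x\<in>space \<mu>. 0 \<le> g x"
    and pg: "prob_space (density \<mu> (\<lambda>x. ennreal (g x)))"
    and igf: "integrable \<mu> (\<lambda>x. g x * ln (g x / f x))" and kl: "0 < KL \<mu> g f"
    and mgf: "\<exists>\<delta>>0. \<forall>t::real. \<bar>t\<bar> < \<delta> \<longrightarrow> integrable (density \<mu> (\<lambda>x. ennreal (g x))) (\<lambda>y. exp (t * llr f g y))"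
  shows "\<exists>s0>0. \<exists>c>0. \<forall>s. 0 < s \<and> s \<le> s0 \<longrightarrow>
      integrable (density \<mu> (\<lambda>x. ennreal (g x))) (\<lambda>x. exp (s * - llr f g x)) \<and>
      (\<integral>x. exp (s * - llr f g x) \<partial>density \<mu> (\<lambda>x. ennreal (g x))) \<le> 1 - c * s"
proof -
  obtain \<delta> where d: "\<delta> > 0" "\<forall>t::real. \<bar>t\<bar> < \<delta> \<longrightarrow> integrable (density \<mu> (\<lambda>x. ennreal (g x))) (\<lambda>y. exp (t * llr f g y))"
    using mgf by blast
  have d2: "\<forall>t::real. \<bar>t\<bar> < \<delta> \<longrightarrow> integrable (density \<mu> (\<lambda>x. ennreal (g x))) (\<lambda>y. exp (t * - llr f g y))"
  proof (intro allI impI)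
    fix t :: real assume "\<bar>t\<bar> < \<delta>"
    then have "\<bar>-t\<bar> < \<delta>" by simp
    then have "integrable (density \<mu> (\<lambda>x. ennreal (g x))) (\<lambda>y. exp ((-t) * llr f g y))" using d(2) by blast
    then show "integrable (density \<mu> (\<lambda>x. ennreal (g x))) (\<lambda>y. exp (t * - llr f g y))" by simp
  qed
  have AEg: "AE x in \<mu>. 0 \<le> g x" using gp by (auto intro: AE_I2)
  have eq: "g x *\<^sub>R (- llr f g x) = - (g x * ln (g x / f x))" for x
    by (simp add: llr_def)
  have Xm: "(\<lambda>x. - llr f g x) \<in> borel_measurable (density \<mu> (\<lambda>x. ennreal (g x)))"
    unfolding llr_def by simp
  have Xi: "integrable (density \<mu> (\<lambda>x. ennreal (g x))) (\<lambda>x. - llr f g x)"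
  proof -
    have "(\<lambda>x. g x *\<^sub>R (- llr f g x)) = (\<lambda>x. - (g x * ln (g x / f x)))" by (rule ext, rule eq)
    then have "integrable \<mu> (\<lambda>x. g x *\<^sub>R (- llr f g x))" using igf by simp
    then show ?thesis using integrable_density[of "\<lambda>x. - llr f g x" \<mu> g] AEg unfolding llr_def by simp
  qed
  have "(\<integral>x. - llr f g x \<partial>density \<mu> (\<lambda>x. ennreal (g x))) = (\<integral>x. g x *\<^sub>R (- llr f g x) \<partial>\<mu>)"
    using integral_density[of "\<lambda>x. - llr f g x" \<mu> g] AEg unfolding llr_def by simp
  also have "\<dots> = - KL \<mu> g f" unfolding eq KL_def by simp
  finally have neg: "(\<integral>x. - llr f g x \<partial>density \<mu> (\<lambda>x. ennreal (g x))) < 0" using kl by simp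
  show ?thesis using mgf_contract[OF pg Xm Xi neg d(1) d2] by simp
qed




lemma exp_sum_convex:
  fixes x :: "'i \<Rightarrow> real"
  assumes "finite J" "J \<noteq> {}"
  shows "exp (\<Sum>i\<in>J. x i) \<le> (\<Sum>i\<in>J. (1 / real (card J)) * exp (real (card J) * x i))"
proof -
  have cJ: "real (card J) > 0" using assms by (simp add: card_gt_0_iff)
  have "exp (\<Sum>i\<in>J. x i) = exp (\<Sum>i\<in>J. (1 / real (card J)) *\<^sub>R (real (card J) * x i))"
    using cJ by simp
  also have "\<dots> \<le> (\<Sum>i\<in>J. (1 / real (card J)) * exp (real (card J) * x i))"
    using assms cJ by (intro convex_on_sum[where C=UNIV] exp_convex) auto
  finally show ?thesis .
qed

locale dgfm = dgfl +
  fixes K :: nat and a0 b0 \<theta> lam :: real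
  assumes mM: "m \<in> {1..M}" and K1: "1 \<le> K"
    and rule: "\<forall>n\<ge>1. \<forall>\<omega>\<in>space P. dgf_rule M K a0 b0 (\<lambda>k. cumS (llr f g) Y sel k (n - 1) \<omega>) (sel n \<omega>)"
    and dist: "\<forall>k\<in>{1..M}. \<forall>t. distr P \<mu> (Y k t) = density \<mu> (\<lambda>x. ennreal (if k = m then g x else f x))"
    and thpos: "\<theta> > 0" and lam: "0 \<le> lam" "lam \<le> 1"
    and bf: "\<forall>s. \<theta> \<le> s \<and> s \<le> real M * real M * \<theta> \<longrightarrow>
       (\<integral>\<^sup>+x. ennreal (exp (s * llr f g x)) \<partial>density \<mu> (\<lambda>x. ennreal (f x))) \<le> ennreal lam"
    and bg: "\<forall>s. \<theta> \<le> s \<and> s \<le> real M * real M * \<theta> \<longrightarrow>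
       (\<integral>\<^sup>+x. ennreal (exp (s * - llr f g x)) \<partial>density \<mu> (\<lambda>x. ennreal (g x))) \<le> ennreal lam"
begin

lemma E_f: "i \<in> {1..M} \<Longrightarrow> i \<noteq> m \<Longrightarrow> \<theta> \<le> s \<Longrightarrow> s \<le> real M * real M * \<theta> \<Longrightarrow>
   (\<integral>\<^sup>+\<omega>. ennreal (exp (s * llr f g (Y i t \<omega>))) \<partial>P) \<le> ennreal lam"
proof -
  assume a: "i \<in> {1..M}" "i \<noteq> m" "\<theta> \<le> s" "s \<le> real M * real M * \<theta>"
  have "(\<integral>\<^sup>+\<omega>. ennreal (exp (s * llr f g (Y i t \<omega>))) \<partial>P)
      = (\<integral>\<^sup>+y. ennreal (exp (s * llr f g y)) \<partial>distr P \<mu> (Y i t))"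
    by (rule nn_integral_distr[symmetric]) (use Y_meas[OF a(1)] in auto)
  also have "distr P \<mu> (Y i t) = density \<mu> (\<lambda>x. ennreal (f x))" using dist a by simp
  finally show ?thesis using bf a by simp
qed

lemma E_g: "\<theta> \<le> s \<Longrightarrow> s \<le> real M * real M * \<theta> \<Longrightarrow>
   (\<integral>\<^sup>+\<omega>. ennreal (exp (s * - llr f g (Y m t \<omega>))) \<partial>P) \<le> ennreal lam"
proof -
  assume a: "\<theta> \<le> s" "s \<le> real M * real M * \<theta>"
  have "(\<integral>\<^sup>+\<omega>. ennreal (exp (s * - llr f g (Y m t \<omega>))) \<partial>P)
      = (\<integral>\<^sup>+y. ennreal (exp (s * - llr f g y)) \<partial>distr P \<mu> (Y m t))"
    by (rule nn_integral_distr[symmetric]) (use Y_meas[OF mM] in auto)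
  also have "distr P \<mu> (Y m t) = density \<mu> (\<lambda>x. ennreal (g x))" using dist mM by simp
  finally show ?thesis using bg a by simp
qed

end



context dgfm begin

definition "NN = {1..M} - {m}"
definition "TT = {T. T \<subseteq> NN \<and> T \<noteq> {}}"
definition "tm T n \<omega> = exp (\<theta> * (\<Sum>j\<in>T. S j n \<omega> - S m n \<omega>))"
definition "Wx T A n \<omega> = exp (\<theta> * ((\<Sum>j\<in>T. if j \<in> A then llr f g (Y j (Suc n) \<omega>) else 0)
     - real (card T) * (if m \<in> A then llr f g (Y m (Suc n) \<omega>) else 0)))"
definition "Zf T A n \<omega> = (if sel (Suc n) \<omega> = A then ennreal (tm T n \<omega>) else 0)"
definition "cc T A = (if T \<inter> A \<noteq> {} \<or> m \<in> A then lam else 1)"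

lemma tm_meas: "T \<subseteq> {1..M} \<Longrightarrow> (\<lambda>\<omega>. tm T n \<omega>) \<in> borel_measurable (Fn n)"
proof -
  assume T: "T \<subseteq> {1..M}"
  have [measurable]: "(\<lambda>\<omega>. \<Sum>j\<in>T. S j n \<omega> - S m n \<omega>) \<in> borel_measurable (Fn n)"
    using T mM by (intro borel_measurable_sum borel_measurable_diff S_meas) auto
  show ?thesis unfolding tm_def by measurable
qed

lemma Zf_meas: "T \<subseteq> {1..M} \<Longrightarrow> Zf T A n \<in> borel_measurable (Fn n)"
proof -
  assume T: "T \<subseteq> {1..M}"
  have "(\<lambda>\<omega>. if \<omega> \<in> {\<omega>. sel (Suc n) \<omega> = A} then ennreal (tm T n \<omega>) else 0) \<in> borel_measurable (Fn n)"
  proof (rule measurable_If_set)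
    show "(\<lambda>\<omega>. ennreal (tm T n \<omega>)) \<in> borel_measurable (Fn n)"
      using tm_meas[OF T] by measurable
    show "(\<lambda>\<omega>. 0::ennreal) \<in> borel_measurable (Fn n)" by simp
    have "{\<omega>. sel (Suc n) \<omega> = A} \<inter> space (Fn n) = {\<omega> \<in> space P. sel (Suc n) \<omega> = A}" by auto
    then show "{\<omega>. sel (Suc n) \<omega> = A} \<inter> space (Fn n) \<in> sets (Fn n)" using sel_eq_Fn[of "Suc n" n A] by simp
  qed
  then show ?thesis unfolding Zf_def by simp
qed

lemma Zf_measP: "T \<subseteq> {1..M} \<Longrightarrow> Zf T A n \<in> borel_measurable P"
  by (rule measurable_from_subalg[OF subalg_Fn Zf_meas])

lemma TT_sub: "T \<in> TT \<Longrightarrow> T \<subseteq> {1..M} \<and> m \<notin> T \<and> T \<noteq> {} \<and> finite T"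
  unfolding TT_def NN_def using finite_subset[of T "{1..M}"] by auto

lemma card_T: "T \<in> TT \<Longrightarrow> 1 \<le> card T \<and> card T \<le> M"
proof -
  assume "T \<in> TT"
  then have T: "T \<subseteq> {1..M}" "T \<noteq> {}" "finite T" using TT_sub by auto
  have "card T \<le> card {1..M}" using T by (intro card_mono) auto
  moreover have "card T \<ge> 1" using T by (simp add: Suc_le_eq card_gt_0_iff)
  ultimately show ?thesis by simp
qed

lemma bound_TA:
  assumes T: "T \<in> TT"
  shows "(\<integral>\<^sup>+\<omega>. Zf T A n \<omega> * ennreal (Wx T A n \<omega>) \<partial>P) \<le> ennreal (cc T A) * (\<integral>\<^sup>+\<omega>. Zf T A n \<omega> \<partial>P)"
proof (cases "T \<inter> A \<noteq> {} \<or> m \<in> A")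
  case False
  then have "Wx T A n \<omega> = 1" for \<omega>
    unfolding Wx_def by (auto intro!: sum.neutral)
  then show ?thesis using False by (simp add: cc_def)
next
  case True
  have Tp: "T \<subseteq> {1..M}" "m \<notin> T" "T \<noteq> {}" "finite T" using TT_sub[OF T] by auto
  define J where "J = insert m T \<inter> A"
  define r where "r = card J"
  define hx where "hx i y = (if i = m then (\<theta> * real (card T)) * - llr f g y else \<theta> * llr f g y)" for i y
  have finJ: "finite J" using Tp by (simp add: J_def)
  have Jne: "J \<noteq> {}" using True by (auto simp: J_def)
  have JM: "J \<subseteq> {1..M}" using Tp mM by (auto simp: J_def)
  have r1: "1 \<le> r" using finJ Jne by (simp add: r_def Suc_le_eq card_gt_0_iff)
  have rM: "r \<le> M" unfolding r_def using card_mono[OF _ JM] by simp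
  have cT: "1 \<le> card T" "card T \<le> M" using card_T[OF T] by auto
  have Weq: "Wx T A n \<omega> = exp (\<Sum>i\<in>J. hx i (Y i (Suc n) \<omega>))" for \<omega>
  proof -
    have s1: "(\<Sum>j\<in>T. if j \<in> A then llr f g (Y j (Suc n) \<omega>) else 0) = (\<Sum>j\<in>T \<inter> A. llr f g (Y j (Suc n) \<omega>))"
      using Tp by (simp add: sum.inter_restrict)
    have s2: "(\<Sum>i\<in>T \<inter> A. hx i (Y i (Suc n) \<omega>)) = \<theta> * (\<Sum>j\<in>T \<inter> A. llr f g (Y j (Suc n) \<omega>))"
      using Tp unfolding sum_distrib_left by (intro sum.cong refl) (auto simp: hx_def)
    show ?thesis
    proof (cases "m \<in> A")
      case True
      have "J = insert m (T \<inter> A)" using True by (auto simp: J_def)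
      then have "(\<Sum>i\<in>J. hx i (Y i (Suc n) \<omega>)) = hx m (Y m (Suc n) \<omega>) + (\<Sum>i\<in>T \<inter> A. hx i (Y i (Suc n) \<omega>))"
        using Tp by (simp add: sum.insert)
      then show ?thesis unfolding Wx_def s1 using s2 True by (simp add: hx_def algebra_simps)
    next
      case False
      have "J = T \<inter> A" using False by (auto simp: J_def)
      then show ?thesis unfolding Wx_def s1 using s2 False by simp
    qed
  qed
  have hxm: "(\<lambda>y. ennreal (exp (real r * hx i y))) \<in> borel_measurable \<mu>" for i
    unfolding hx_def by measurable
  have Eh: "(\<integral>\<^sup>+\<omega>. ennreal (exp (real r * hx i (Y i (Suc n) \<omega>))) \<partial>P) \<le> ennreal lam" if i: "i \<in> J" for i
  proof (cases "i = m")
    case True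
    have "real r * hx i y = (real r * \<theta> * real (card T)) * - llr f g y" for y
      using True by (simp add: hx_def)
    moreover have "\<theta> \<le> real r * \<theta> * real (card T)"
    proof -
      have "1 * 1 \<le> real r * real (card T)" using r1 cT by (intro mult_mono) auto
      then have "1 * \<theta> \<le> (real r * real (card T)) * \<theta>" using thpos by (intro mult_right_mono) auto
      then show ?thesis by (simp add: algebra_simps)
    qed
    moreover have "real r * \<theta> * real (card T) \<le> real M * real M * \<theta>"
    proof -
      have "real r * real (card T) \<le> real M * real M" using rM cT by (intro mult_mono) auto
      then have "(real r * real (card T)) * \<theta> \<le> (real M * real M) * \<theta>" using thpos by (intro mult_right_mono) auto
      then show ?thesis by (simp add: algebra_simps)
    qed
    ultimately show ?thesis using E_g[of "real r * \<theta> * real (card T)" "Suc n"] True by simp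
  next
    case False
    have iM: "i \<in> {1..M}" using i JM by auto
    have "real r * hx i y = (real r * \<theta>) * llr f g y" for y
      using False by (simp add: hx_def)
    moreover have "\<theta> \<le> real r * \<theta>" using r1 thpos by simp
    moreover have "real r * \<theta> \<le> real M * real M * \<theta>"
    proof -
      have "real r \<le> real M * real M" using rM r1
        by (metis le_trans mult_le_cancel_left1 nat_le_real_less of_nat_0_less_iff of_nat_le_iff of_nat_mult le_square)
      then show ?thesis using thpos by (intro mult_right_mono) auto
    qed
    ultimately have "(\<integral>\<^sup>+\<omega>. ennreal (exp ((real r * \<theta>) * llr f g (Y i (Suc n) \<omega>))) \<partial>P) \<le> ennreal lam"
      using E_f[OF iM False, of "real r * \<theta>" "Suc n"] by blast
    moreover have "(\<lambda>\<omega>. ennreal (exp (real r * hx i (Y i (Suc n) \<omega>)))) = (\<lambda>\<omega>. ennreal (exp ((real r * \<theta>) * llr f g (Y i (Suc n) \<omega>))))"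
      using False by (simp add: hx_def mult.assoc)
    ultimately show ?thesis by simp
  qed
  have cvx: "Wx T A n \<omega> \<le> (\<Sum>i\<in>J. (1 / real r) * exp (real r * hx i (Y i (Suc n) \<omega>)))" for \<omega>
    unfolding Weq r_def by (rule exp_sum_convex[OF finJ Jne])
  have "(\<integral>\<^sup>+\<omega>. Zf T A n \<omega> * ennreal (Wx T A n \<omega>) \<partial>P)
      \<le> (\<integral>\<^sup>+\<omega>. (\<Sum>i\<in>J. ennreal (1 / real r) * (Zf T A n \<omega> * ennreal (exp (real r * hx i (Y i (Suc n) \<omega>))))) \<partial>P)"
  proof (rule nn_integral_mono)
    fix \<omega>
    have "Zf T A n \<omega> * ennreal (Wx T A n \<omega>) \<le> Zf T A n \<omega> * ennreal (\<Sum>i\<in>J. (1 / real r) * exp (real r * hx i (Y i (Suc n) \<omega>)))"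
      using cvx by (intro mult_left_mono ennreal_leI) auto
    also have "\<dots> = (\<Sum>i\<in>J. ennreal (1 / real r) * (Zf T A n \<omega> * ennreal (exp (real r * hx i (Y i (Suc n) \<omega>)))))"
    proof -
      have "ennreal (\<Sum>i\<in>J. (1 / real r) * exp (real r * hx i (Y i (Suc n) \<omega>)))
          = (\<Sum>i\<in>J. ennreal ((1 / real r) * exp (real r * hx i (Y i (Suc n) \<omega>))))"
        by (rule sum_ennreal[symmetric]) simp
      also have "\<dots> = (\<Sum>i\<in>J. ennreal (1 / real r) * ennreal (exp (real r * hx i (Y i (Suc n) \<omega>))))"
        by (intro sum.cong refl ennreal_mult) auto
      finally show ?thesis by (simp add: sum_distrib_left ac_simps)
    qed
    finally show "Zf T A n \<omega> * ennreal (Wx T A n \<omega>) \<le> (\<Sum>i\<in>J. ennreal (1 / real r) * (Zf T A n \<omega> * ennreal (exp (real r * hx i (Y i (Suc n) \<omega>)))))" .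
  qed
  also have "\<dots> = (\<Sum>i\<in>J. ennreal (1 / real r) * (\<integral>\<^sup>+\<omega>. Zf T A n \<omega> * ennreal (exp (real r * hx i (Y i (Suc n) \<omega>))) \<partial>P))"
  proof -
    have m1: "(\<lambda>\<omega>. Zf T A n \<omega> * ennreal (exp (real r * hx i (Y i (Suc n) \<omega>)))) \<in> borel_measurable P" if "i \<in> J" for i
    proof -
      have "(\<lambda>\<omega>. ennreal (exp (real r * hx i (Y i (Suc n) \<omega>)))) \<in> borel_measurable P"
        using measurable_compose[OF Y_meas hxm] that JM by auto
      then show ?thesis using Zf_measP[OF Tp(1)] by measurable
    qed
    show ?thesis
      by (subst nn_integral_sum) (use m1 in \<open>auto intro!: sum.cong nn_integral_cmult simp: measurable_compose\<close>)
  qed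
  also have "\<dots> = (\<Sum>i\<in>J. ennreal (1 / real r) * ((\<integral>\<^sup>+\<omega>. Zf T A n \<omega> \<partial>P) * (\<integral>\<^sup>+\<omega>. ennreal (exp (real r * hx i (Y i (Suc n) \<omega>))) \<partial>P)))"
    using JM by (intro sum.cong refl arg_cong2[where f="(*)"] indep_step[OF Zf_meas[OF Tp(1)] _ hxm]) auto
  also have "\<dots> \<le> (\<Sum>i\<in>J. ennreal (1 / real r) * ((\<integral>\<^sup>+\<omega>. Zf T A n \<omega> \<partial>P) * ennreal lam))"
    using Eh by (intro sum_mono mult_left_mono) auto
  also have "\<dots> = ennreal (cc T A) * (\<integral>\<^sup>+\<omega>. Zf T A n \<omega> \<partial>P)"
  proof -
    have one: "(of_nat r :: ennreal) * ennreal (1 / real r) = 1"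
    proof -
      have "(of_nat r :: ennreal) * ennreal (1 / real r) = ennreal (real r * (1 / real r))"
        by (simp only: ennreal_of_nat_eq_real_of_nat ennreal_mult[symmetric] of_nat_0_le_iff)
           (rule ennreal_mult[symmetric]; simp)
      also have "real r * (1 / real r) = 1" using r1 by simp
      finally show ?thesis by simp
    qed
    have "(\<Sum>i\<in>J. ennreal (1 / real r) * ((\<integral>\<^sup>+\<omega>. Zf T A n \<omega> \<partial>P) * ennreal lam))
        = of_nat r * (ennreal (1 / real r) * ((\<integral>\<^sup>+\<omega>. Zf T A n \<omega> \<partial>P) * ennreal lam))"
      by (simp add: r_def)
    also have "\<dots> = (of_nat r * ennreal (1 / real r)) * ((\<integral>\<^sup>+\<omega>. Zf T A n \<omega> \<partial>P) * ennreal lam)"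
      by (simp add: mult.assoc)
    also have "\<dots> = ennreal lam * (\<integral>\<^sup>+\<omega>. Zf T A n \<omega> \<partial>P)" unfolding one by (simp add: mult.commute)
    finally show ?thesis using True by (simp add: cc_def)
  qed
  finally show ?thesis .
qed

end



context dgfm begin

definition "Phi n \<omega> = (\<Sum>T\<in>TT. tm T n \<omega>)"
definition "rho = (lam + real (card TT)) / (1 + real (card TT))"

lemma finTT: "finite TT"
proof -
  have "TT \<subseteq> Pow {1..M}" unfolding TT_def NN_def by auto
  then show ?thesis by (rule finite_subset) simp
qed

lemma S_Suc: "S k (Suc n) \<omega> = S k n \<omega> + (if k \<in> sel (Suc n) \<omega> then llr f g (Y k (Suc n) \<omega>) else 0)"
  unfolding cumS_def by simp

lemma tm_Suc: "T \<in> TT \<Longrightarrow> tm T (Suc n) \<omega> = tm T n \<omega> * Wx T (sel (Suc n) \<omega>) n \<omega>"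
proof -
  assume T: "T \<in> TT"
  have fT: "finite T" using TT_sub[OF T] by auto
  define A where "A = sel (Suc n) \<omega>"
  have "(\<Sum>j\<in>T. S j (Suc n) \<omega> - S m (Suc n) \<omega>) = (\<Sum>j\<in>T. S j n \<omega> - S m n \<omega>)
     + ((\<Sum>j\<in>T. if j \<in> A then llr f g (Y j (Suc n) \<omega>) else 0)
     - real (card T) * (if m \<in> A then llr f g (Y m (Suc n) \<omega>) else 0))"
    unfolding S_Suc A_def using fT by (simp add: sum.distrib sum_subtractf algebra_simps)
  then show ?thesis unfolding tm_def Wx_def A_def by (simp add: distrib_left exp_add)
qed

lemma tm_measP: "T \<in> TT \<Longrightarrow> (\<lambda>\<omega>. tm T n \<omega>) \<in> borel_measurable P"
  using TT_sub by (intro measurable_from_subalg[OF subalg_Fn tm_meas]) auto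

lemma Wx_measP: "T \<in> TT \<Longrightarrow> (\<lambda>\<omega>. Wx T A n \<omega>) \<in> borel_measurable P"
proof -
  assume T: "T \<in> TT"
  have TM: "T \<subseteq> {1..M}" using TT_sub[OF T] by auto
  have [measurable]: "(\<lambda>\<omega>. llr f g (Y j (Suc n) \<omega>)) \<in> borel_measurable P" if "j \<in> {1..M}" for j
    using measurable_compose[OF Y_meas[OF that] llr_meas] by simp
  have [measurable]: "(\<lambda>\<omega>. \<Sum>j\<in>T. if j \<in> A then llr f g (Y j (Suc n) \<omega>) else 0) \<in> borel_measurable P"
    using TM by (intro borel_measurable_sum) auto
  have [measurable]: "(\<lambda>\<omega>. llr f g (Y m (Suc n) \<omega>)) \<in> borel_measurable P" using mM by simp
  show ?thesis unfolding Wx_def by measurable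
qed

lemma tm_Suc_split: "T \<in> TT \<Longrightarrow> \<omega> \<in> space P \<Longrightarrow>
   ennreal (tm T (Suc n) \<omega>) = (\<Sum>A\<in>Pow {1..M}. Zf T A n \<omega> * ennreal (Wx T A n \<omega>))"
proof -
  assume T: "T \<in> TT" and w: "\<omega> \<in> space P"
  have sub: "sel (Suc n) \<omega> \<in> Pow {1..M}" using sel_sub w by auto
  have "(\<Sum>A\<in>Pow {1..M}. Zf T A n \<omega> * ennreal (Wx T A n \<omega>))
     = (\<Sum>A\<in>Pow {1..M}. if sel (Suc n) \<omega> = A then ennreal (tm T n \<omega>) * ennreal (Wx T A n \<omega>) else 0)"
    unfolding Zf_def by (intro sum.cong refl) auto
  also have "\<dots> = ennreal (tm T n \<omega>) * ennreal (Wx T (sel (Suc n) \<omega>) n \<omega>)"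
    using sub by simp
  also have "\<dots> = ennreal (tm T (Suc n) \<omega>)"
    unfolding tm_Suc[OF T] by (simp add: ennreal_mult tm_def Wx_def)
  finally show ?thesis by simp
qed

lemma cc_split: "T \<in> TT \<Longrightarrow> \<omega> \<in> space P \<Longrightarrow>
   (\<Sum>A\<in>Pow {1..M}. ennreal (cc T A) * Zf T A n \<omega>) = ennreal (cc T (sel (Suc n) \<omega>) * tm T n \<omega>)"
proof -
  assume T: "T \<in> TT" and w: "\<omega> \<in> space P"
  have sub: "sel (Suc n) \<omega> \<in> Pow {1..M}" using sel_sub w by auto
  have c0: "0 \<le> cc T A" for A using lam by (simp add: cc_def)
  have "(\<Sum>A\<in>Pow {1..M}. ennreal (cc T A) * Zf T A n \<omega>)
     = (\<Sum>A\<in>Pow {1..M}. if sel (Suc n) \<omega> = A then ennreal (cc T A) * ennreal (tm T n \<omega>) else 0)"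
    unfolding Zf_def by (intro sum.cong refl) auto
  also have "\<dots> = ennreal (cc T (sel (Suc n) \<omega>)) * ennreal (tm T n \<omega>)" using sub by simp
  also have "\<dots> = ennreal (cc T (sel (Suc n) \<omega>) * tm T n \<omega>)" by (rule ennreal_mult[symmetric]) (auto simp: c0 tm_def)
  finally show ?thesis .
qed

lemma pt_contract: "\<omega> \<in> space P \<Longrightarrow>
   (\<Sum>T\<in>TT. cc T (sel (Suc n) \<omega>) * tm T n \<omega>) \<le> rho * Phi n \<omega>"
proof -
  assume w: "\<omega> \<in> space P"
  define A where "A = sel (Suc n) \<omega>"
  have R: "dgf_rule M K a0 b0 (\<lambda>k. S k n \<omega>) A" using rule w unfolding A_def
    by (metis diff_Suc_1 le_add1 plus_1_eq_Suc)
  have "(\<Sum>T\<in>TT. (if T \<inter> A \<noteq> {} \<or> m \<in> A then lam else 1) * tm T n \<omega>)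
      \<le> ((lam + card TT) / (1 + card TT)) * (\<Sum>T\<in>TT. tm T n \<omega>)"
  proof (rule contract_pt[OF finTT _ lam])
    show "\<forall>T\<in>TT. 0 \<le> tm T n \<omega>" by (simp add: tm_def)
    show "\<forall>T\<in>TT. \<not> (T \<inter> A \<noteq> {} \<or> m \<in> A) \<longrightarrow> (\<exists>T'\<in>TT. (T' \<inter> A \<noteq> {} \<or> m \<in> A) \<and> tm T n \<omega> \<le> tm T' n \<omega>)"
    proof (intro ballI impI)
      fix T assume T: "T \<in> TT" and nP: "\<not> (T \<inter> A \<noteq> {} \<or> m \<in> A)"
      have Ts: "T \<subseteq> {1..M} - {m}" "T \<noteq> {}" using T unfolding TT_def NN_def by auto
      obtain T' where T': "T' \<subseteq> {1..M} - {m}" "T' \<noteq> {}" "T' \<inter> A \<noteq> {}"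
        "(\<Sum>j\<in>T. S j n \<omega> - S m n \<omega>) \<le> (\<Sum>j\<in>T'. S j n \<omega> - S m n \<omega>)"
        using dominate[OF R K1 mM _ Ts] nP by blast
      have "T' \<in> TT" using T' unfolding TT_def NN_def by auto
      moreover have "tm T n \<omega> \<le> tm T' n \<omega>" unfolding tm_def using T'(4) thpos by simp
      ultimately show "\<exists>T'\<in>TT. (T' \<inter> A \<noteq> {} \<or> m \<in> A) \<and> tm T n \<omega> \<le> tm T' n \<omega>" using T' by blast
    qed
  qed
  then show ?thesis unfolding A_def Phi_def rho_def cc_def by simp
qed

lemma Phi_step: "(\<integral>\<^sup>+\<omega>. ennreal (Phi (Suc n) \<omega>) \<partial>P) \<le> ennreal rho * (\<integral>\<^sup>+\<omega>. ennreal (Phi n \<omega>) \<partial>P)"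
proof -
  have tm0: "0 \<le> tm T k \<omega>" for T k \<omega> by (simp add: tm_def)
  have "(\<integral>\<^sup>+\<omega>. ennreal (Phi (Suc n) \<omega>) \<partial>P) = (\<integral>\<^sup>+\<omega>. (\<Sum>T\<in>TT. ennreal (tm T (Suc n) \<omega>)) \<partial>P)"
    unfolding Phi_def using tm0 by (simp add: sum_ennreal)
  also have "\<dots> = (\<integral>\<^sup>+\<omega>. (\<Sum>T\<in>TT. \<Sum>A\<in>Pow {1..M}. Zf T A n \<omega> * ennreal (Wx T A n \<omega>)) \<partial>P)"
    by (intro nn_integral_cong sum.cong refl tm_Suc_split) auto
  also have "\<dots> = (\<Sum>T\<in>TT. \<Sum>A\<in>Pow {1..M}. (\<integral>\<^sup>+\<omega>. Zf T A n \<omega> * ennreal (Wx T A n \<omega>) \<partial>P))"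
  proof -
    have m: "(\<lambda>\<omega>. Zf T A n \<omega> * ennreal (Wx T A n \<omega>)) \<in> borel_measurable P" if "T \<in> TT" for T A
    proof -
      have TM: "T \<subseteq> {1..M}" using TT_sub[OF that] by auto
      have [measurable]: "Zf T A n \<in> borel_measurable P" by (rule Zf_measP[OF TM])
      have [measurable]: "(\<lambda>\<omega>. Wx T A n \<omega>) \<in> borel_measurable P" by (rule Wx_measP[OF that])
      show ?thesis by measurable
    qed
    show ?thesis using m by (simp add: nn_integral_sum borel_measurable_sum)
  qed
  also have "\<dots> \<le> (\<Sum>T\<in>TT. \<Sum>A\<in>Pow {1..M}. ennreal (cc T A) * (\<integral>\<^sup>+\<omega>. Zf T A n \<omega> \<partial>P))"
    by (intro sum_mono bound_TA)
  also have "\<dots> = (\<integral>\<^sup>+\<omega>. (\<Sum>T\<in>TT. \<Sum>A\<in>Pow {1..M}. ennreal (cc T A) * Zf T A n \<omega>) \<partial>P)"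
  proof -
    have m: "Zf T A n \<in> borel_measurable P" if "T \<in> TT" for T A
      using Zf_measP[of T A n] TT_sub[OF that] by simp
    show ?thesis using m by (simp add: nn_integral_sum borel_measurable_sum nn_integral_cmult)
  qed
  also have "\<dots> = (\<integral>\<^sup>+\<omega>. ennreal (\<Sum>T\<in>TT. cc T (sel (Suc n) \<omega>) * tm T n \<omega>) \<partial>P)"
  proof (intro nn_integral_cong)
    fix \<omega> assume w: "\<omega> \<in> space P"
    have c0: "0 \<le> cc T A" for T A using lam by (simp add: cc_def)
    have "(\<Sum>T\<in>TT. \<Sum>A\<in>Pow {1..M}. ennreal (cc T A) * Zf T A n \<omega>) = (\<Sum>T\<in>TT. ennreal (cc T (sel (Suc n) \<omega>) * tm T n \<omega>))"
      using cc_split w by (intro sum.cong refl) auto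
    also have "\<dots> = ennreal (\<Sum>T\<in>TT. cc T (sel (Suc n) \<omega>) * tm T n \<omega>)"
      using c0 tm0 by (intro sum_ennreal) auto
    finally show "(\<Sum>T\<in>TT. \<Sum>A\<in>Pow {1..M}. ennreal (cc T A) * Zf T A n \<omega>) = ennreal (\<Sum>T\<in>TT. cc T (sel (Suc n) \<omega>) * tm T n \<omega>)" .
  qed
  also have "\<dots> \<le> (\<integral>\<^sup>+\<omega>. ennreal rho * ennreal (Phi n \<omega>) \<partial>P)"
  proof (intro nn_integral_mono)
    fix \<omega> assume w: "\<omega> \<in> space P"
    have r0: "0 \<le> rho" using lam by (simp add: rho_def)
    have "ennreal (\<Sum>T\<in>TT. cc T (sel (Suc n) \<omega>) * tm T n \<omega>) \<le> ennreal (rho * Phi n \<omega>)"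
      using pt_contract[OF w] by (rule ennreal_leI)
    also have "\<dots> = ennreal rho * ennreal (Phi n \<omega>)" using r0 by (rule ennreal_mult')
    finally show "ennreal (\<Sum>T\<in>TT. cc T (sel (Suc n) \<omega>) * tm T n \<omega>) \<le> ennreal rho * ennreal (Phi n \<omega>)" .
  qed
  also have "\<dots> = ennreal rho * (\<integral>\<^sup>+\<omega>. ennreal (Phi n \<omega>) \<partial>P)"
  proof -
    have "(\<lambda>\<omega>. Phi n \<omega>) \<in> borel_measurable P"
      unfolding Phi_def using tm_measP by (intro borel_measurable_sum) auto
    then show ?thesis by (simp add: nn_integral_cmult)
  qed
  finally show ?thesis .
qed

end



context dgfm begin

lemma Phi0: "Phi 0 \<omega> = real (card TT)"
  unfolding Phi_def tm_def cumS_def by simp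

lemma Phi_meas: "(\<lambda>\<omega>. Phi n \<omega>) \<in> borel_measurable P"
  unfolding Phi_def using tm_measP by (intro borel_measurable_sum) auto

lemma Phi_bound: "(\<integral>\<^sup>+\<omega>. ennreal (Phi n \<omega>) \<partial>P) \<le> ennreal (rho ^ n * real (card TT))"
proof (induction n)
  case 0
  interpret prob_space P by (rule PP)
  show ?case by (simp add: Phi0 emeasure_space_1)
next
  case (Suc n)
  have r0: "0 \<le> rho" using lam by (simp add: rho_def)
  have "(\<integral>\<^sup>+\<omega>. ennreal (Phi (Suc n) \<omega>) \<partial>P) \<le> ennreal rho * (\<integral>\<^sup>+\<omega>. ennreal (Phi n \<omega>) \<partial>P)"
    by (rule Phi_step)
  also have "\<dots> \<le> ennreal rho * ennreal (rho ^ n * real (card TT))"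
    using Suc by (rule mult_left_mono) simp
  also have "\<dots> = ennreal (rho ^ Suc n * real (card TT))"
    using r0 by (simp add: ennreal_mult'[symmetric] mult.assoc)
  finally show ?case .
qed

definition "Ev n = {\<omega> \<in> space P. 1 \<le> Phi n \<omega>}"

lemma Ev_sets: "Ev n \<in> sets P"
  unfolding Ev_def using Phi_meas by measurable

lemma Ev_measure: "measure P (Ev n) \<le> rho ^ n * real (card TT)"
proof -
  interpret prob_space P by (rule PP)
  have "emeasure P (Ev n) = (\<integral>\<^sup>+\<omega>. indicator (Ev n) \<omega> \<partial>P)"
    using Ev_sets by simp
  also have "\<dots> \<le> (\<integral>\<^sup>+\<omega>. ennreal (Phi n \<omega>) \<partial>P)"
    by (intro nn_integral_mono) (auto simp: Ev_def indicator_def)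
  also have "\<dots> \<le> ennreal (rho ^ n * real (card TT))" by (rule Phi_bound)
  finally have "ennreal (measure P (Ev n)) \<le> ennreal (rho ^ n * real (card TT))"
    by (simp add: emeasure_eq_measure)
  moreover have "0 \<le> rho ^ n * real (card TT)" using lam by (simp add: rho_def)
  ultimately show ?thesis by (simp add: ennreal_le_iff)
qed

lemma tail_in: "\<omega> \<in> space P \<Longrightarrow> tau1 M m (\<lambda>k n. S k n \<omega>) > enat n \<Longrightarrow> \<exists>i. \<omega> \<in> Ev (n + i)"
proof -
  assume w: "\<omega> \<in> space P" and tg: "tau1 M m (\<lambda>k n. S k n \<omega>) > enat n"
  define Q where "Q t = (\<forall>n'\<ge>t. \<forall>j\<in>{1..M} - {m}. S j n' \<omega> < S m n' \<omega>)" for t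
  have "\<not> Q n"
  proof
    assume Qn: "Q n"
    then have ex: "\<exists>t. Q t" by blast
    have "(LEAST t. Q t) \<le> n" using Qn by (rule Least_le)
    moreover have "tau1 M m (\<lambda>k n. S k n \<omega>) = enat (LEAST t. Q t)"
      using ex unfolding tau1_def Q_def by simp
    ultimately show False using tg by simp
  qed
  then obtain n' j where nj: "n' \<ge> n" "j \<in> {1..M} - {m}" "\<not> S j n' \<omega> < S m n' \<omega>"
    unfolding Q_def by blast
  have jT: "{j} \<in> TT" using nj unfolding TT_def NN_def by auto
  have "1 \<le> tm {j} n' \<omega>" unfolding tm_def using nj thpos by simp
  also have "tm {j} n' \<omega> \<le> Phi n' \<omega>"
    unfolding Phi_def using jT finTT by (intro member_le_sum) (auto simp: tm_def)
  finally have "\<omega> \<in> Ev n'" using w by (simp add: Ev_def)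
  moreover have "n' = n + (n' - n)" using nj by simp
  ultimately show ?thesis by metis
qed

lemma TT_card: "2 \<le> M \<Longrightarrow> 1 \<le> card TT"
proof -
  assume M: "2 \<le> M"
  define j :: nat where "j = (if m = 1 then 2 else 1)"
  have "{j} \<in> TT" using M mM unfolding TT_def NN_def j_def by auto
  then show ?thesis using finTT by (metis One_nat_def Suc_leI card_gt_0_iff empty_iff)
qed

lemma tail_bound:
  assumes M: "2 \<le> M" and lam1: "lam < 1"
  shows "\<exists>C>0. \<exists>\<gamma>>0. \<forall>n\<ge>1.
           measure P {\<omega> \<in> space P. tau1 M m (\<lambda>k n. cumS (llr f g) Y sel k n \<omega>) > enat n}
             \<le> C * exp (- \<gamma> * real n)"
proof -
  interpret prob_space P by (rule PP)
  define N where "N = real (card TT)"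
  have N1: "1 \<le> N" using TT_card[OF M] by (simp add: N_def)
  have rho0: "0 < rho" using lam N1 by (simp add: rho_def N_def)
  have rho1: "rho < 1" using lam1 N1 by (simp add: rho_def N_def field_simps)
  define C where "C = N / (1 - rho)"
  define \<gamma> where "\<gamma> = - ln rho"
  have C0: "C > 0" using N1 rho1 by (simp add: C_def)
  have g0: "\<gamma> > 0" using rho0 rho1 by (simp add: \<gamma>_def)
  have main: "measure P {\<omega> \<in> space P. tau1 M m (\<lambda>k n. cumS (llr f g) Y sel k n \<omega>) > enat n}
             \<le> C * exp (- \<gamma> * real n)" for n
  proof -
    define B where "B i = Ev (n + i)" for i
    have Bs: "range B \<subseteq> sets P" using Ev_sets by (auto simp: B_def)
    have gs: "(\<lambda>i. N * rho ^ n * rho ^ i) sums (N * rho ^ n * (1 / (1 - rho)))"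
      using rho0 rho1 by (intro sums_mult geometric_sums) auto
    have Bm: "measure P (B i) \<le> N * rho ^ n * rho ^ i" for i
      using Ev_measure[of "n + i"] by (simp add: B_def N_def power_add ac_simps)
    have sB: "summable (\<lambda>i. measure P (B i))"
      by (rule summable_comparison_test[OF _ sums_summable[OF gs]]) (use Bm in auto)
    have "measure P (\<Union>i. B i) \<le> (\<Sum>i. measure P (B i))"
      by (rule finite_measure_subadditive_countably[OF Bs sB])
    also have "\<dots> \<le> (\<Sum>i. N * rho ^ n * rho ^ i)"
      by (rule suminf_le[OF Bm sB sums_summable[OF gs]])
    also have "\<dots> = N * rho ^ n * (1 / (1 - rho))" using gs by (rule sums_unique[symmetric])
    also have "\<dots> = C * exp (- \<gamma> * real n)"
    proof -
      have "rho ^ n = exp (real n * ln rho)" using rho0 by (simp add: exp_of_nat_mult)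
      then show ?thesis by (simp add: C_def \<gamma>_def)
    qed
    finally have U: "measure P (\<Union>i. B i) \<le> C * exp (- \<gamma> * real n)" .
    let ?E = "{\<omega> \<in> space P. tau1 M m (\<lambda>k n. cumS (llr f g) Y sel k n \<omega>) > enat n}"
    show ?thesis
    proof (cases "?E \<in> sets P")
      case True
      have "?E \<subseteq> (\<Union>i. B i)" using tail_in unfolding B_def by blast
      then have "measure P ?E \<le> measure P (\<Union>i. B i)"
        using Bs by (intro finite_measure_mono) auto
      then show ?thesis using U by linarith
    next
      case False
      then have "measure P ?E = 0" by (rule measure_notin_sets)
      moreover have "0 \<le> C * exp (- \<gamma> * real n)" using C0 by simp
      ultimately show ?thesis by simp
    qed
  qed
  show ?thesis using C0 g0 main by blast
qed

end



lemma dgf_sub: "dgf_rule M K a b s A \<Longrightarrow> A \<subseteq> {1..M}"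
proof -
  assume R: "dgf_rule M K a b s A"
  show ?thesis
  proof (cases "topK K {1..M} s A")
    case True then show ?thesis unfolding topK_def by blast
  next
    case False
    then have "ranks2K K {1..M} s A" using R unfolding dgf_rule_def by (auto split: if_splits)
    then obtain c where "topK K ({1..M} - {c}) s A" unfolding ranks2K_def by blast
    then show ?thesis unfolding topK_def by blast
  qed
qed

theorem lemma7:
  fixes \<mu> :: "'a measure" and f g :: "'a \<Rightarrow> real"
    and P :: "'w measure" and Y :: "nat \<Rightarrow> nat \<Rightarrow> 'w \<Rightarrow> 'a"
    and sel :: "nat \<Rightarrow> 'w \<Rightarrow> nat set" and M K m :: nat
  assumes "2 \<le> M" and "1 \<le> K" and "K \<le> M" and "m \<in> {1..M}"
    and "f \<in> borel_measurable \<mu>" and "g \<in> borel_measurable \<mu>"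
    and "\<forall>x\<in>space \<mu>. 0 \<le> f x" and "\<forall>x\<in>space \<mu>. 0 \<le> g x"
    and "prob_space (density \<mu> (\<lambda>x. ennreal (f x)))"
    and "prob_space (density \<mu> (\<lambda>x. ennreal (g x)))"
    and "AE x in \<mu>. (f x = 0 \<longleftrightarrow> g x = 0)"
    and "integrable \<mu> (\<lambda>x. g x * ln (g x / f x))"
    and "integrable \<mu> (\<lambda>x. f x * ln (f x / g x))"
    and "0 < KL \<mu> g f" and "0 < KL \<mu> f g"
    and "\<exists>\<delta>>0. \<forall>t::real. \<bar>t\<bar> < \<delta> \<longrightarrow>
           integrable (density \<mu> (\<lambda>x. ennreal (f x))) (\<lambda>y. exp (t * llr f g y)) \<and>
           integrable (density \<mu> (\<lambda>x. ennreal (g x))) (\<lambda>y. exp (t * llr f g y))"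
    and "prob_space P"
    and "prob_space.indep_vars P (\<lambda>_. \<mu>) (\<lambda>(k, t). Y k t) ({1..M} \<times> UNIV)"
    and "\<forall>k\<in>{1..M}. \<forall>t. distr P \<mu> (Y k t) = density \<mu> (\<lambda>x. ennreal (if k = m then g x else f x))"
    and "\<forall>n\<ge>1. \<forall>\<omega>\<in>space P.
           dgf_rule M K (KL \<mu> g f) (KL \<mu> f g) (\<lambda>k. cumS (llr f g) Y sel k (n - 1) \<omega>) (sel n \<omega>)"
    and "\<forall>n\<ge>1. \<forall>A. {\<omega> \<in> space P. sel n \<omega> = A} \<in> past_sigma P \<mu> Y M n"
  shows "\<exists>C>0. \<exists>\<gamma>>0. \<forall>n\<ge>1.
           measure P {\<omega> \<in> space P. tau1 M m (\<lambda>k n. cumS (llr f g) Y sel k n \<omega>) > enat n}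
             \<le> C * exp (- \<gamma> * real n)"
proof -
  note A = assms
  obtain \<delta> where d: "\<delta> > 0" "\<forall>t::real. \<bar>t\<bar> < \<delta> \<longrightarrow>
           integrable (density \<mu> (\<lambda>x. ennreal (f x))) (\<lambda>y. exp (t * llr f g y)) \<and>
           integrable (density \<mu> (\<lambda>x. ennreal (g x))) (\<lambda>y. exp (t * llr f g y))"
    using A(16) by blast
  have mf: "\<exists>\<delta>>0. \<forall>t::real. \<bar>t\<bar> < \<delta> \<longrightarrow> integrable (density \<mu> (\<lambda>x. ennreal (f x))) (\<lambda>y. exp (t * llr f g y))"
    using d by blast
  have mg: "\<exists>\<delta>>0. \<forall>t::real. \<bar>t\<bar> < \<delta> \<longrightarrow> integrable (density \<mu> (\<lambda>x. ennreal (g x))) (\<lambda>y. exp (t * llr f g y))"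
    using d by blast
  obtain s1 c1 where s1: "s1 > 0" "c1 > 0" and b1: "\<forall>s. 0 < s \<and> s \<le> s1 \<longrightarrow>
      integrable (density \<mu> (\<lambda>x. ennreal (f x))) (\<lambda>x. exp (s * llr f g x)) \<and>
      (\<integral>x. exp (s * llr f g x) \<partial>density \<mu> (\<lambda>x. ennreal (f x))) \<le> 1 - c1 * s"
    using kl_side_f[OF A(5) A(6) A(7) A(9) A(13) A(15) mf] by blast
  obtain s2 c2 where s2: "s2 > 0" "c2 > 0" and b2: "\<forall>s. 0 < s \<and> s \<le> s2 \<longrightarrow>
      integrable (density \<mu> (\<lambda>x. ennreal (g x))) (\<lambda>x. exp (s * - llr f g x)) \<and>
      (\<integral>x. exp (s * - llr f g x) \<partial>density \<mu> (\<lambda>x. ennreal (g x))) \<le> 1 - c2 * s"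
    using kl_side_g[OF A(5) A(6) A(8) A(10) A(12) A(14) mg] by blast
  define s0 where "s0 = min s1 s2"
  define c where "c = min c1 c2"
  define \<theta> where "\<theta> = s0 / (real M * real M)"
  define lam where "lam = 1 - c * \<theta>"
  have M2: "real M * real M > 0" using A(1) by simp
  have s0p: "s0 > 0" using s1 s2 by (simp add: s0_def)
  have cp: "c > 0" using s1 s2 by (simp add: c_def)
  have thp: "\<theta> > 0" using s0p M2 by (simp add: \<theta>_def)
  have thM: "real M * real M * \<theta> = s0" using M2 A(1) by (simp add: \<theta>_def)
  have cth: "c * \<theta> \<le> c1 * s" "c * \<theta> \<le> c2 * s" if "\<theta> \<le> s" for s
    using that cp thp by (auto simp: c_def intro!: mult_mono)
  have bf: "\<forall>s. \<theta> \<le> s \<and> s \<le> real M * real M * \<theta> \<longrightarrow>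
       (\<integral>\<^sup>+x. ennreal (exp (s * llr f g x)) \<partial>density \<mu> (\<lambda>x. ennreal (f x))) \<le> ennreal lam"
  proof (intro allI impI)
    fix s assume s: "\<theta> \<le> s \<and> s \<le> real M * real M * \<theta>"
    then have s': "0 < s" "s \<le> s1" using thp thM by (auto simp: s0_def)
    have I: "integrable (density \<mu> (\<lambda>x. ennreal (f x))) (\<lambda>x. exp (s * llr f g x))" using b1 s' by blast
    have "(\<integral>\<^sup>+x. ennreal (exp (s * llr f g x)) \<partial>density \<mu> (\<lambda>x. ennreal (f x)))
        = ennreal (\<integral>x. exp (s * llr f g x) \<partial>density \<mu> (\<lambda>x. ennreal (f x)))"
      using I by (intro nn_integral_eq_integral) auto
    also have "\<dots> \<le> ennreal lam" using b1 s' cth[of s] s unfolding lam_def by (intro ennreal_leI) force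
    finally show "(\<integral>\<^sup>+x. ennreal (exp (s * llr f g x)) \<partial>density \<mu> (\<lambda>x. ennreal (f x))) \<le> ennreal lam" .
  qed
  have bg: "\<forall>s. \<theta> \<le> s \<and> s \<le> real M * real M * \<theta> \<longrightarrow>
       (\<integral>\<^sup>+x. ennreal (exp (s * - llr f g x)) \<partial>density \<mu> (\<lambda>x. ennreal (g x))) \<le> ennreal lam"
  proof (intro allI impI)
    fix s assume s: "\<theta> \<le> s \<and> s \<le> real M * real M * \<theta>"
    then have s': "0 < s" "s \<le> s2" using thp thM by (auto simp: s0_def)
    have I: "integrable (density \<mu> (\<lambda>x. ennreal (g x))) (\<lambda>x. exp (s * - llr f g x))" using b2 s' by blast
    have "(\<integral>\<^sup>+x. ennreal (exp (s * - llr f g x)) \<partial>density \<mu> (\<lambda>x. ennreal (g x)))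
        = ennreal (\<integral>x. exp (s * - llr f g x) \<partial>density \<mu> (\<lambda>x. ennreal (g x)))"
      using I by (intro nn_integral_eq_integral) auto
    also have "\<dots> \<le> ennreal lam" using b2 s' cth[of s] s unfolding lam_def by (intro ennreal_leI) force
    finally show "(\<integral>\<^sup>+x. ennreal (exp (s * - llr f g x)) \<partial>density \<mu> (\<lambda>x. ennreal (g x))) \<le> ennreal lam" .
  qed
  have lam0: "0 \<le> lam"
  proof -
    have "1 \<le> real M" using A(1) by simp
    then have MM: "1 * 1 \<le> real M * real M" by (intro mult_mono) auto
    have "s0 * 1 \<le> s0 * (real M * real M)" using MM s0p by (intro mult_left_mono) auto
    then have "\<theta> \<le> s0" using M2 by (simp add: \<theta>_def field_simps)
    then have t: "0 < \<theta>" "\<theta> \<le> s1" using thp by (auto simp: s0_def)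
    have "0 \<le> (\<integral>x. exp (\<theta> * llr f g x) \<partial>density \<mu> (\<lambda>x. ennreal (f x)))" by simp
    also have "\<dots> \<le> 1 - c1 * \<theta>" using b1 t by blast
    also have "\<dots> \<le> lam" using cth[of \<theta>] by (simp add: lam_def)
    finally show ?thesis .
  qed
  have lam1: "lam < 1" using cp thp by (simp add: lam_def)
  have sel_sub: "\<forall>n\<ge>1. \<forall>\<omega>\<in>space P. sel n \<omega> \<subseteq> {1..M}"
    using A(20) dgf_sub by blast
  interpret dgfm \<mu> f g P Y sel M m K "KL \<mu> g f" "KL \<mu> f g" \<theta> lam
    by (rule dgfm.intro[OF dgfl.intro[OF A(5) A(6) A(17) A(18) sel_sub A(21)]
          dgfm_axioms.intro[OF A(4) A(2) A(20) A(19) thp lam0 less_imp_le[OF lam1] bf bg]])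
  show ?thesis by (rule tail_bound[OF A(1) lam1])
qed


end
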